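(* Let $q=2^h$, let $A,B,C,D\in\mathbb F_{q^4}$ with $B\ne 0$ and $B^{q^2}=1/B$, and let $$\Lambda=\{(u,v)\in\mathbb F_{q^4}^2 : v^{q^2}+Au+Bv+u^q=0,\ v^{q^2}+u^{q^2}+v^q+Cu+Dv=0\}.$$ Then $\#\Lambda\le q^3$. *)

theory Defs
  imports Main
begin

end

theory Submission
  imports Defs "HOL-Computational_Algebra.Polynomial"
begin

lemma cert_char2:
  fixes x a b c :: "'a::comm_ring_1"
  assumes c2: "(1::'a) + 1 = 0"
  and d0: "a*(a*b+x+1) + (1+c)*(1+b*c) = 0"
  and d1: "b*(b*c+a+1) + (1+x)*(1+c*x) = 0"
  and d2: "c*(c*x+b+1) + (1+a)*(1+x*a) = 0"
  and d3: "x*(x*a+c+1) + (1+b)*(1+a*b) = 0"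
shows "x*a+b*c+1 = 0"
proof -
  have "x*a+b*c+1 + (x*a*c+x*c^2+b*c+a+c+1)*(a*(a*b+x+1) + (1+c)*(1+b*c))
     + a^2*(b*(b*c+a+1) + (1+x)*(1+c*x)) + (a*b*c+b*c^2+b*c)*(c*(c*x+b+1) + (1+a)*(1+x*a))
     + c^2*(x*(x*a+c+1) + (1+b)*(1+a*b)) = (1+1)*(1 + c + c^2 + 2*b*c + 3*b*c^2 + b*c^3 + b^2*c^2 + b^2*c^3 + a + a*c + 2*a*b*c + 2*a*b*c^2 + a*b^2*c^2 + a^2 + a^2*b + a^2*b*c + a^2*b^2*c + a^3*b + x*c^2 + x*c^3 + x*b*c^3 + x*b*c^4 + x*a + x*a*c + x*a*c^2 + x*a*b*c + x*a*b*c^2 + x*a*b*c^3 + x*a^2 + x*a^2*c + x*a^2*b*c + x*a^2*b*c^2 + x*a^3*b*c + x^2*a*c^2 + x^2*a^2*c)"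
    by (simp add: algebra_simps power2_eq_square power3_eq_cube numeral_eq_Suc)
  then show ?thesis by (simp only: d0 d1 d2 d3 c2 mult_zero_right mult_zero_left add_0_right)
qed

lemma char2_eq:
  fixes y z :: "'a::comm_ring_1"
  assumes c2: "(1::'a) + 1 = 0" and "y + z = 0"
  shows "y = z"
proof -
  have zz: "z + z = 0" using c2 by (metis distrib_left mult.right_neutral mult_zero_right)
  have "y = (y + z) + z" using zz by (simp add: add.assoc)
  then show ?thesis using assms(2) by simp
qed

lemma char2_comb:
  fixes X Y Z :: "'a::comm_ring_1"
  assumes c2: "(1::'a) + 1 = 0" and "X = Y + (1+1)*Z" and "X = 0"
  shows "Y = 0"
  using assms by simp

lemma frob2:
  fixes x y :: "'a::comm_ring_1"
  assumes c2: "(1::'a) + 1 = 0"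
  shows "(x+y)^(2^k) = x^(2^k) + y^(2^k)"
proof (induction k)
  case 0
  then show ?case by simp
next
  case (Suc k)
  have e: "(2::nat)^(Suc k) = 2^k * 2" by simp
  have "(x+y)^(2^Suc k) = ((x+y)^(2^k))^2" by (simp only: e power_mult)
  also have "\<dots> = (x^(2^k) + y^(2^k))^2" using Suc by simp
  also have "\<dots> = (x^(2^k))^2 + (y^(2^k))^2 + (1+1)*(x^(2^k)*y^(2^k))"
    by (simp add: power2_eq_square algebra_simps)
  also have "\<dots> = x^(2^Suc k) + y^(2^Suc k)" by (simp only: c2 e power_mult) simp
  finally show ?case .
qed

lemma card_zero_ring:
  shows "of_nat (card (UNIV::'a::{comm_ring_1,finite} set)) = (0::'a)"
proof -
  have inj: "inj (\<lambda>x::'a. x + 1)" by (rule injI) simp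
  have im: "range (\<lambda>x::'a. x + 1) = UNIV"
    by (metis (no_types, lifting) UNIV_eq_I diff_add_cancel rangeI)
  have "sum (\<lambda>x. x + 1) (UNIV::'a set) = sum (\<lambda>x. x) UNIV"
    by (rule sum.reindex_bij_witness[of _ "\<lambda>x. x - 1" "\<lambda>x. x + 1"]) auto
  then have "sum (\<lambda>x. x) (UNIV::'a set) + of_nat (card (UNIV::'a set)) = sum (\<lambda>x. x) UNIV + 0"
    by (simp add: sum.distrib)
  then show ?thesis by (simp only: add_left_cancel)
qed

lemma fermat_field:
  fixes x :: "'a::{field,finite}"
  shows "x ^ card (UNIV::'a set) = x"
proof (cases "x = 0")
  case True
  have "card (UNIV::'a set) > 0" by (simp add: card_gt_0_iff)
  then show ?thesis using True by simp
next
  case False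
  define N where "N = (UNIV::'a set) - {0}"
  have fin: "finite N" by simp
  have inj: "inj_on (\<lambda>y. x*y) N" using False by (auto simp: inj_on_def)
  have im: "(\<lambda>y. x*y) ` N = N"
  proof
    show "(\<lambda>y. x*y) ` N \<subseteq> N" using False by (auto simp: N_def)
    show "N \<subseteq> (\<lambda>y. x*y) ` N"
    proof
      fix z assume "z \<in> N"
      then have "z = x * (z / x)" "z / x \<in> N" using False by (auto simp: N_def)
      then show "z \<in> (\<lambda>y. x*y) ` N" by blast
    qed
  qed
  have "prod id N = prod id ((\<lambda>y. x*y) ` N)" by (simp only: im)
  also have "\<dots> = prod (\<lambda>y. x*y) N" by (simp add: prod.reindex[OF inj])
  also have "\<dots> = x ^ card N * prod id N" by (simp add: prod.distrib)
  finally have eq: "prod id N = x ^ card N * prod id N" .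
  have nz: "prod id N \<noteq> 0" using fin by (auto simp: N_def)
  have x1: "x ^ card N = 1" using eq nz by (metis mult_cancel_right1)
  have cN: "card (UNIV::'a set) = Suc (card N)"
    unfolding N_def by (simp add: card_Diff_singleton_if card_gt_0_iff Suc_diff_1)
  show ?thesis using x1 cN by simp
qed

lemma qpow_neq:
  assumes q: "q \<ge> (2::nat)"
  shows "q^3 \<noteq> q^2" "q^3 \<noteq> q" "q^3 \<noteq> 1" "q^2 \<noteq> q" "q^2 \<noteq> 1" "q \<noteq> 1"
proof -
  have a: "q < q^2" "q^2 < q^3" "1 < q" "q < q^3" "1 < q^2" "1 < q^3"
    using power_strict_increasing[of 1 2 q] power_strict_increasing[of 2 3 q]
      power_strict_increasing[of 0 1 q] power_strict_increasing[of 1 3 q]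
      power_strict_increasing[of 0 2 q] power_strict_increasing[of 0 3 q] q by simp_all
  show "q^3 \<noteq> q^2" "q^3 \<noteq> q" "q^3 \<noteq> 1" "q^2 \<noteq> q" "q^2 \<noteq> 1" "q \<noteq> 1"
    using a by (metis less_not_refl)+
qed

lemma monom_deg_le: "n \<le> m \<Longrightarrow> degree (monom c n) \<le> m"
  using degree_monom_le order_trans by blast

lemma roots3:
  fixes c3 c2 c1 c0 :: "'a::field"
  assumes q: "q \<ge> (2::nat)" and c3: "c3 \<noteq> 0"
  shows "card {u. c3*u^(q^3) + c2*u^(q^2) + c1*u^q + c0*u = 0} \<le> q^3"
proof -
  define p where "p = monom c3 (q^3) + monom c2 (q^2) + monom c1 q + monom c0 1"
  have ev: "poly p u = c3*u^(q^3) + c2*u^(q^2) + c1*u^q + c0*u" for u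
    by (simp add: p_def poly_monom)
  note n = qpow_neq[OF q]
  have "coeff p (q^3) = c3" using n n[symmetric] by (simp add: p_def coeff_monom)
  then have pnz: "p \<noteq> 0" using c3 by auto
  have le: "q^2 \<le> q^3" "q \<le> q^3" "1 \<le> q^3" using q power_increasing[of 1 2 q] power_increasing[of 1 3 q] power_increasing[of 2 3 q] power_increasing[of 0 3 q] power_increasing[of 0 2 q] by simp_all
  have dg: "degree p \<le> q^3"
    unfolding p_def using le
    by (intro degree_add_le monom_deg_le; simp)
  have "card {u. c3*u^(q^3) + c2*u^(q^2) + c1*u^q + c0*u = 0} = card {u. poly p u = 0}"
    by (simp add: ev)
  also have "\<dots> \<le> degree p" by (rule card_poly_roots_bound[OF pnz])
  finally show ?thesis using dg by simp
qed

lemma roots2: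
  fixes c2 c1 c0 :: "'a::field"
  assumes q: "q \<ge> (2::nat)" and nz: "\<not> (c2 = 0 \<and> c1 = 0 \<and> c0 = 0)"
  shows "card {u. c2*u^(q^2) + c1*u^q + c0*u = 0} \<le> q^2"
proof -
  define p where "p = monom c2 (q^2) + monom c1 q + monom c0 1"
  have ev: "poly p u = c2*u^(q^2) + c1*u^q + c0*u" for u
    by (simp add: p_def poly_monom)
  note n = qpow_neq[OF q]
  have "coeff p (q^2) = c2" "coeff p q = c1" "coeff p 1 = c0"
    using n n[symmetric] by (auto simp add: p_def coeff_monom)
  then have pnz: "p \<noteq> 0" using nz by auto
  have le: "q \<le> q^2" "1 \<le> q^2" using q power_increasing[of 1 2 q] power_increasing[of 1 3 q] power_increasing[of 2 3 q] power_increasing[of 0 3 q] power_increasing[of 0 2 q] by simp_all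
  have dg: "degree p \<le> q^2"
    unfolding p_def using le
    by (intro degree_add_le monom_deg_le; simp)
  have "card {u. c2*u^(q^2) + c1*u^q + c0*u = 0} = card {u. poly p u = 0}"
    by (simp add: ev)
  also have "\<dots> \<le> degree p" by (rule card_poly_roots_bound[OF pnz])
  finally show ?thesis using dg by simp
qed

lemma roots1:
  fixes e c :: "'a::field"
  assumes q: "q \<ge> (2::nat)"
  shows "card {v. v^q + e*v + c = 0} \<le> q"
proof -
  define p where "p = monom 1 q + monom e 1 + [:c:]"
  have ev: "poly p v = v^q + e*v + c" for v
    by (simp add: p_def poly_monom)
  note n = qpow_neq[OF q]
  have "coeff p q = 1" using n n[symmetric] q by (simp add: p_def coeff_monom coeff_pCons split: nat.split)
  then have pnz: "p \<noteq> 0" by auto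
  have dg: "degree p \<le> q"
    unfolding p_def using q
    by (intro degree_add_le monom_deg_le; simp)
  have "card {v. v^q + e*v + c = 0} = card {v. poly p v = 0}"
    by (simp add: ev)
  also have "\<dots> \<le> degree p" by (rule card_poly_roots_bound[OF pnz])
  finally show ?thesis using dg by simp
qed


lemma char2_add2:
  fixes X Y :: "'a::comm_ring_1"
  assumes c2: "(1::'a) + 1 = 0"
  shows "X + Y + Y = X"
proof -
  have "Y + Y = (1+1)*Y" by (simp add: algebra_simps)
  then show ?thesis using c2 by (simp add: add.assoc)
qed

lemma pow4_fix:
  fixes B :: "'a::comm_ring_1"
  assumes "B^3 = 1"
  shows "B^(4^k) = B"
proof (induction k)
  case 0 then show ?case by simp
next
  case (Suc k)
  have "B^(4^Suc k) = (B^(4^k))^4" by (simp only: power_Suc2 power_mult)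
  also have "\<dots> = B^4" using Suc by simp
  also have "\<dots> = B^3 * B" by (simp add: power_Suc2[symmetric] numeral_eq_Suc)
  finally show ?case using assms by simp
qed

lemma degen:
  fixes A B E F :: "'a::field" and q h :: nat
  assumes c2: "(1::'a)+1=0" and qpos: "q>0"
   and fadd: "\<And>x y::'a. \<And>n. (x+y)^(q^n) = x^(q^n)+y^(q^n)"
   and fadd1: "\<And>x y::'a. (x+y)^q = x^q+y^q"
   and red4: "\<And>y::'a. y^(q^4) = y"
   and qdef: "q = 2^h"
   and Bnz: "B \<noteq> 0" and Binv0: "B^(q^2) = 1/B"
   and True: "B + E*E^q = 0"
   and T2: "B*(1+E^q) + B*A^(q^2) = 0" and T1: "B*(F^q+E^q+1)+1 = 0" and T0: "B*(E^q*F+A)+A = 0"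
  shows False
proof -
  have pp: "(y^(q^m))^(q^n) = y^(q^(m+n))" for y :: 'a and m n
    by (simp add: power_mult power_add)
  have pp1: "(y^q)^(q^n) = y^(q^(n+1))" for y :: 'a and n
    by (simp add: power_mult power_add mult.commute)
  have pp2: "(y^(q^m))^q = y^(q^(m+1))" for y :: 'a and m
    by (simp only: power_add power_one_right power_mult)
  have pp3: "(y^q)^q = y^(q^2)" for y :: 'a
    by (simp add: power_mult power2_eq_square)
  have red5: "y^(q^5) = y^q" for y :: 'a
  proof -
    have "y^(q^5) = (y^(q^4))^q" using pp2[of y 4] by simp
    then show ?thesis using red4 by simp
  qed
  have red6: "y^(q^6) = y^(q^2)" for y :: 'a
    using pp[of y 4 2] red4 by simp
  have dbl: "y + y = 0" for y :: 'a
  proof -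
    have "y + y = (1+1)*y" by (simp add: algebra_simps)
    then show ?thesis using c2 by simp
  qed
  define K where "K = B + E*E^q"
  have "K = 0" using True K_def by simp
  note True = this
  define t2 where "t2 = B*(1+E^q) + B*A^(q^2)"
  define t1 where "t1 = B*(F^q+E^q+1) + 1"
  define t0 where "t0 = B*(E^q*F+A) + A"
  have T2: "t2 = 0" using T2 t2_def by simp
  have T1: "t1 = 0" using T1 t1_def by simp
  have T0: "t0 = 0" using T0 t0_def by simp
      have BE: "B = E * E^q" using char2_eq[OF c2] True unfolding K_def by blast
      have Bq2: "B^(q^2) = E^(q^2) * E^(q^3)"
        using BE pp1[of E 2] by (simp add: power_mult_distrib)
      have invB: "1 / B = E^(q^2) * E^(q^3)" using Bq2 Binv0 by simp
      have hA0: "B * ((1+E^q) + A^(q^2)) = 0" using T2 unfolding t2_def by (simp add: algebra_simps)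
      have hA1: "(1+E^q) + A^(q^2) = 0" using hA0 Bnz by simp
      have hA2: "A^(q^2) = 1 + E^q" using char2_eq[OF c2 hA1] by simp
      have hA: "A = 1 + E^(q^3)"
      proof -
        have "(A^(q^2))^(q^2) = (1 + E^q)^(q^2)" using hA2 by simp
        then show ?thesis by (simp add: fadd pp pp1 red4)
      qed
      have hF0: "B*(F^q+E^q+1) = 1" using char2_eq[OF c2] T1 unfolding t1_def by blast
      have hF1: "F^q+E^q+1 = E^(q^2) * E^(q^3)" using hF0 Bnz invB
        by (metis nonzero_mult_div_cancel_left div_by_1 divide_divide_eq_right mult.commute)
      have hF2: "F^q = E^(q^2) * E^(q^3) + (E^q + 1)"
      proof -
        have "F^q = (F^q + (E^q+1)) + (E^q+1)" by (rule char2_add2[OF c2, symmetric])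
        also have "\<dots> = E^(q^2) * E^(q^3) + (E^q + 1)" using hF1 by (simp add: add.assoc)
        finally show ?thesis .
      qed
      have hF: "F = E^q * E^(q^2) + (E + 1)"
      proof -
        have "(F^q)^(q^3) = (E^(q^2) * E^(q^3) + (E^q + 1))^(q^3)" using hF2 by simp
        then show ?thesis by (simp add: fadd power_mult_distrib pp pp1 red4 red5 red6)
      qed
      have ht00: "B*(E^q*F+A) + A = 0" using T0 unfolding t0_def .
      have ht0: "B*(E^q*F+A) = A" using char2_eq[OF c2 ht00] .
      have ht0b: "E^q*F+A = A / B" using ht0 Bnz by (simp add: eq_divide_eq mult.commute)
      have ht1: "E^q*F+A = A * (E^(q^2) * E^(q^3))"
        using ht0b invB by (metis times_divide_eq_right mult.right_neutral)
      define x where "x = E"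
      define a where "a = E^q"
      define b where "b = E^(q^2)"
      define c where "c = E^(q^3)"
      have sx: "x^q = a" "a^q = b" "b^q = c" "c^q = x"
        unfolding x_def a_def b_def c_def using pp3[of E] pp2[of E 2] pp2[of E 3] red4 by simp_all
      have e1: "a*(a*b+x+1) + (1+c) = E^q*F+A"
        unfolding x_def a_def b_def c_def hF hA by (simp add: add.assoc)
      have e2: "(1+c)*(b*c) = A * (E^(q^2) * E^(q^3))"
        unfolding b_def c_def hA by simp
      have e3: "a*(a*b+x+1) + (1+c)*(1+b*c) = (a*(a*b+x+1) + (1+c)) + (1+c)*(b*c)"
        by (simp add: algebra_simps)
      have d0: "a*(a*b+x+1) + (1+c)*(1+b*c) = 0"
        unfolding e3 e1 e2 ht1 by (rule dbl)
      have conj: "X = 0 \<Longrightarrow> X^q = 0" for X :: 'a using qpos by simp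
      have d1: "b*(b*c+a+1) + (1+x)*(1+c*x) = 0"
        using conj[OF d0] by (simp add: fadd1 power_mult_distrib sx)
      have d2: "c*(c*x+b+1) + (1+a)*(1+x*a) = 0"
        using conj[OF d1] by (simp add: fadd1 power_mult_distrib sx)
      have d3: "x*(x*a+c+1) + (1+b)*(1+a*b) = 0"
        using conj[OF d2] by (simp add: fadd1 power_mult_distrib sx)
      have xabc: "x*a+b*c+1 = 0" by (rule cert_char2[OF c2 d0 d1 d2 d3])
      have B1: "B + 1/B + 1 = 0" using xabc BE invB unfolding x_def a_def b_def c_def by simp
      have B2: "B*B + B + 1 = 0"
      proof -
        have "B*B + B + 1 = B * (B + 1/B + 1)" using Bnz by (simp add: algebra_simps)
        then show ?thesis using B1 by simp
      qed
      have B3: "B^3 = 1"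
      proof -
        have "B^3 = (B - 1)*(B*B + B + 1) + 1" by (simp add: algebra_simps power3_eq_cube)
        then show ?thesis using B2 by simp
      qed
      have q4: "q^2 = 4^h"
      proof -
        have "q^2 = (2::nat)^(h*2)" using qdef by (simp only: power_mult)
        also have "\<dots> = 2^(2*h)" by (simp only: mult.commute)
        also have "\<dots> = 4^h" by (simp add: power_mult)
        finally show ?thesis .
      qed
      have "B^(q^2) = B" using pow4_fix[OF B3] q4 by simp
      then have "B = 1/B" using Binv0 by simp
      then have "B*B = 1" using Bnz by (simp add: field_simps)
      then have "B + (1 + 1) = 0" using B2 by (simp add: algebra_simps)
      then have "B = 0" using c2 by simp
      then show False using Bnz by simp
qed


theorem proposition4p3:
  fixes h :: nat and q :: nat and A B C D :: "'a :: {field, finite}"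
  assumes "q = 2 ^ h"
    and "card (UNIV :: 'a set) = q ^ 4"
    and "B \<noteq> 0"
    and "B ^ (q ^ 2) = 1 / B"
  shows "card {(u, v). 
            v ^ (q ^ 2) + A * u + B * v + u ^ q = 0 \<and>
            v ^ (q ^ 2) + u ^ (q ^ 2) + v ^ q + C * u + D * v = 0} \<le> q ^ 3"
proof -
  note qdef = assms(1) and cardF = assms(2) and Bnz = assms(3) and Binv0 = assms(4)
  have card2: "card (UNIV::'a set) \<ge> 2"
  proof -
    have "card {0::'a, 1} = 2" by simp
    moreover have "card {0::'a, 1} \<le> card (UNIV::'a set)" by (rule card_mono) auto
    ultimately show ?thesis by simp
  qed
  have hpos: "h \<ge> 1"
  proof (rule ccontr)
    assume "\<not> h \<ge> 1"
    then have "h = 0" by simp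
    then have "card (UNIV::'a set) = 1" using qdef cardF by simp
    then show False using card2 by simp
  qed
  have q2: "q \<ge> 2" using qdef hpos
    by (metis power_increasing power_one_right zero_less_numeral Suc_leI One_nat_def one_le_numeral)
  have qpos: "q > 0" using q2 by simp
  have c2: "(1::'a) + 1 = 0"
  proof -
    have "of_nat (card (UNIV::'a set)) = (0::'a)" by (rule card_zero_ring)
    then have "(of_nat (2 ^ (h*4)) :: 'a) = 0" using qdef cardF by (simp add: power_mult)
    then have "(2::'a) ^ (h*4) = 0" by simp
    then have "(2::'a) = 0" by simp
    then show ?thesis by simp
  qed
  have fadd: "(x+y)^(q^n) = x^(q^n) + y^(q^n)" for x y :: 'a and n
  proof -
    have "q^n = 2^(h*n)" using qdef by (simp add: power_mult)
    then show ?thesis using frob2[OF c2] by simp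
  qed
  have fadd1: "(x+y)^q = x^q + y^q" for x y :: 'a
    using fadd[of x y 1] by simp
  have pp: "(y^(q^m))^(q^n) = y^(q^(m+n))" for y :: 'a and m n
    by (simp add: power_mult power_add)
  have pp1: "(y^q)^(q^n) = y^(q^(n+1))" for y :: 'a and n
    by (simp add: power_mult power_add mult.commute)
  have pp2: "(y^(q^m))^q = y^(q^(m+1))" for y :: 'a and m
    by (simp only: power_add power_one_right power_mult)
  have pp3: "(y^q)^q = y^(q^2)" for y :: 'a
    by (simp add: power_mult power2_eq_square)
  have red4: "y^(q^4) = y" for y :: 'a using fermat_field[of y] cardF by simp
  have red5: "y^(q^5) = y^q" for y :: 'a
  proof -
    have "y^(q^5) = (y^(q^4))^q" using pp2[of y 4] by simp
    then show ?thesis using red4 by simp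
  qed
  have red6: "y^(q^6) = y^(q^2)" for y :: 'a
    using pp[of y 4 2] red4 by simp
  have red7: "y^(q^7) = y^(q^3)" for y :: 'a
    using pp[of y 4 3] red4 by simp
  have z0: "(0::'a)^(q^n) = 0" for n using qpos by simp
  have z1: "(0::'a)^q = 0" using qpos by simp
  have BB: "B * B^(q^2) = 1" using Binv0 Bnz by simp
  have dbl: "y + y = 0" for y :: 'a
  proof -
    have "y + y = (1+1)*y" by (simp add: algebra_simps)
    then show ?thesis using c2 by simp
  qed

  define E where "E = B + D"
  define F where "F = A + C"
  define K where "K = B + E * E^q"
  define Pf where "Pf = (\<lambda>u::'a. u^(q^3) + (1+E^q)*u^(q^2) + (F^q+E^q+1)*u^q + (E^q*F+A)*u)"
  define Sf where "Sf = (\<lambda>u::'a. B*u^(q^3) + B*A^(q^2)*u^(q^2) + 1*u^q + A*u)"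
  define L where "L = {(u, v). 
            v ^ (q ^ 2) + A * u + B * v + u ^ q = 0 \<and>
            v ^ (q ^ 2) + u ^ (q ^ 2) + v ^ q + C * u + D * v = 0}"

  have key: "K*v + Pf u = 0 \<and> Sf u = 0 \<and> v^q + E*v + (u^(q^2)+u^q+F*u) = 0"
    if uv: "(u,v) \<in> L" for u v
  proof -
    from uv have eq1: "v ^ (q ^ 2) + A * u + B * v + u ^ q = 0"
      and eq2: "v ^ (q ^ 2) + u ^ (q ^ 2) + v ^ q + C * u + D * v = 0" by (auto simp: L_def)
    have e2: "v^q + u^(q^2) + u^q + F*u + E*v = 0"
    proof (rule char2_comb[OF c2])
      show "(v ^ (q ^ 2) + A * u + B * v + u ^ q) + (v ^ (q ^ 2) + u ^ (q ^ 2) + v ^ q + C * u + D * v)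
          = (v^q + u^(q^2) + u^q + F*u + E*v) + (1+1) * v^(q^2)"
        by (simp add: E_def F_def algebra_simps)
      show "(v ^ (q ^ 2) + A * u + B * v + u ^ q) + (v ^ (q ^ 2) + u ^ (q ^ 2) + v ^ q + C * u + D * v) = 0"
        using eq1 eq2 by simp
    qed
    have se2: "v^(q^2) + u^(q^3) + u^(q^2) + F^q*u^q + E^q*v^q = 0"
    proof -
      have "(v^q + u^(q^2) + u^q + F*u + E*v)^q = 0" using e2 z1 by simp
      then show ?thesis by (simp add: fadd1 power_mult_distrib pp2 pp3)
    qed
    have e3: "K*v + Pf u = 0"
    proof (rule char2_comb[OF c2])
      show "(v ^ (q ^ 2) + A * u + B * v + u ^ q) + (v^(q^2) + u^(q^3) + u^(q^2) + F^q*u^q + E^q*v^q)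
          + E^q * (v^q + u^(q^2) + u^q + F*u + E*v)
          = (K*v + Pf u) + (1+1) * (v^(q^2) + E^q*v^q)"
        by (simp add: K_def Pf_def algebra_simps)
      show "(v ^ (q ^ 2) + A * u + B * v + u ^ q) + (v^(q^2) + u^(q^3) + u^(q^2) + F^q*u^q + E^q*v^q)
          + E^q * (v^q + u^(q^2) + u^q + F*u + E*v) = 0"
        using eq1 se2 e2 by simp
    qed
    have s2: "v + A^(q^2)*u^(q^2) + B^(q^2)*v^(q^2) + u^(q^3) = 0"
    proof -
      have "(v ^ (q ^ 2) + A * u + B * v + u ^ q)^(q^2) = 0" using eq1 z0 qpos by simp
      then show ?thesis by (simp add: fadd power_mult_distrib pp pp1 red4)
    qed
    have s2b: "B * (v + A^(q^2)*u^(q^2) + B^(q^2)*v^(q^2) + u^(q^3))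
        = B*v + B*A^(q^2)*u^(q^2) + (B*B^(q^2))*v^(q^2) + B*u^(q^3)"
      by (simp add: algebra_simps)
    have eS: "Sf u = 0"
    proof (rule char2_comb[OF c2])
      show "(B*v + B*A^(q^2)*u^(q^2) + v^(q^2) + B*u^(q^3)) + (v ^ (q ^ 2) + A * u + B * v + u ^ q)
          = Sf u + (1+1) * (B*v + v^(q^2))"
        by (simp add: Sf_def algebra_simps)
      show "(B*v + B*A^(q^2)*u^(q^2) + v^(q^2) + B*u^(q^3)) + (v ^ (q ^ 2) + A * u + B * v + u ^ q) = 0"
        using s2 s2b BB eq1 by simp
    qed
    have "v^q + E*v + (u^(q^2)+u^q+F*u) = v^q + u^(q^2) + u^q + F*u + E*v"
      by (simp add: algebra_simps)
    then show ?thesis using e3 eS e2 by simp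
  qed
  have finL: "finite L" by simp
  show ?thesis
  proof (cases "K = 0")
    case False
    have sub: "L \<subseteq> (\<lambda>u. (u, - Pf u / K)) ` {u. Sf u = 0}"
    proof
      fix p assume "p \<in> L"
      then obtain u v where p: "p = (u,v)" and uv: "(u,v) \<in> L" by (cases p) auto
      from key[OF uv] have "K*v + Pf u = 0" "Sf u = 0" by auto
      then have "v = - Pf u / K" "Sf u = 0" using False by (auto simp: field_simps add_eq_0_iff)
      then show "p \<in> (\<lambda>u. (u, - Pf u / K)) ` {u. Sf u = 0}" using p by auto
    qed
    have "card L \<le> card ((\<lambda>u. (u, - Pf u / K)) ` {u. Sf u = 0})"
      by (rule card_mono) (simp, rule sub)
    also have "\<dots> \<le> card {u. Sf u = 0}" by (rule card_image_le) simp
    also have "\<dots> \<le> q^3" unfolding Sf_def using roots3[OF q2 Bnz, of "B*A^(q^2)" 1 A] by simp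
    finally show ?thesis unfolding L_def .
  next
    case True
    define t2 where "t2 = B*(1+E^q) + B*A^(q^2)"
    define t1 where "t1 = B*(F^q+E^q+1) + 1"
    define t0 where "t0 = B*(E^q*F+A) + A"
    have nondeg: "\<not> (t2 = 0 \<and> t1 = 0 \<and> t0 = 0)"
    proof
      assume "t2 = 0 \<and> t1 = 0 \<and> t0 = 0"
      then have T2: "t2 = 0" and T1: "t1 = 0" and T0: "t0 = 0" by auto
      have K0: "B + E*E^q = 0" using True unfolding K_def .
      have U2: "B*(1+E^q) + B*A^(q^2) = 0" using T2 unfolding t2_def .
      have U1: "B*(F^q+E^q+1)+1 = 0" using T1 unfolding t1_def .
      have U0: "B*(E^q*F+A)+A = 0" using T0 unfolding t0_def .
      show False by (rule degen[OF c2 qpos fadd fadd1 red4 qdef Bnz Binv0 K0 U2 U1 U0])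
    qed
    have sub: "L \<subseteq> Sigma {u. t2*u^(q^2) + t1*u^q + t0*u = 0} (\<lambda>u. {v. v^q + E*v + (u^(q^2)+u^q+F*u) = 0})"
    proof
      fix p assume "p \<in> L"
      then obtain u v where p: "p = (u,v)" and uv: "(u,v) \<in> L" by (cases p) auto
      from key[OF uv] have k1: "K*v + Pf u = 0" and k2: "Sf u = 0"
        and k3: "v^q + E*v + (u^(q^2)+u^q+F*u) = 0" by auto
      have Pu: "Pf u = 0" using k1 True by simp
      have "t2*u^(q^2) + t1*u^q + t0*u = 0"
      proof (rule char2_comb[OF c2])
        show "B * Pf u + Sf u = (t2*u^(q^2) + t1*u^q + t0*u) + (1+1) * (B*u^(q^3))"
          by (simp add: Pf_def Sf_def t2_def t1_def t0_def algebra_simps)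
        show "B * Pf u + Sf u = 0" using Pu k2 by simp
      qed
      then show "p \<in> Sigma {u. t2*u^(q^2) + t1*u^q + t0*u = 0} (\<lambda>u. {v. v^q + E*v + (u^(q^2)+u^q+F*u) = 0})"
        using p k3 by auto
    qed
    have "card L \<le> card (Sigma {u. t2*u^(q^2) + t1*u^q + t0*u = 0} (\<lambda>u. {v. v^q + E*v + (u^(q^2)+u^q+F*u) = 0}))"
      by (rule card_mono) (simp_all add: sub)
    also have "\<dots> = (\<Sum>u\<in>{u. t2*u^(q^2) + t1*u^q + t0*u = 0}. card {v. v^q + E*v + (u^(q^2)+u^q+F*u) = 0})"
      by (rule card_SigmaI) simp_all
    also have "\<dots> \<le> (\<Sum>u\<in>{u. t2*u^(q^2) + t1*u^q + t0*u = 0}. q)"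
      by (rule sum_mono) (rule roots1[OF q2])
    also have "\<dots> = card {u. t2*u^(q^2) + t1*u^q + t0*u = 0} * q" by simp
    also have "\<dots> \<le> q^2 * q" using roots2[OF q2 nondeg] by simp
    also have "\<dots> = q^3" by (simp add: power3_eq_cube power2_eq_square)
    finally show ?thesis unfolding L_def .
  qed
qed

end
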